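(* Let $L>0$ and $g\in L^2(0,L;\mathbb{C})$, and let $\tilde A^*$ be the operator on $L^2(0,L)$ with domain $\{z\in H^1(0,L):z(L)=z(0)\}$ defined by $\tilde A^*z(x)=-z'(x)+\int_0^L\overline{g(y)}z(y)dy$. For $\lambda\in\mathbb{C}$ let $w_\lambda(x)=\int_0^xe^{-\lambda(x-\sigma)}d\sigma$ (i.e. $(1-e^{-\lambda x})/\lambda$ if $\lambda\ne0$, $x$ if $\lambda=0$) and $$H(\lambda)=\begin{pmatrix}1-e^{-\lambda L}&-w_\lambda(L)\\ \int_0^L\overline{g(x)}e^{-\lambda x}dx&\int_0^L\overline{g(x)}w_\lambda(x)dx-1\end{pmatrix}.$$ Then: (1) for every $\lambda\in\mathbb{C}$, $\ker(\lambda-\tilde A^* )=\{ae^{-\lambda x}+bw_\lambda(x):(a,b)\in\mathbb{C}^2,\ H(\lambda)(a,b)^T=0\}$; (2) the spectrum of $\tilde A^*$ is $\{\lambda_k=\frac{2ik\pi}{L}:k\in\mathbb{Z},k\ne0\}\cup\{\lambda_0=\int_0^L\overline{g(x)}dx\}$. *)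

theory Defs
  imports "HOL-Analysis.Analysis"
begin

text \<open>Functions on the interval [0,L] are represented as functions real => complex;
  only their values on [0,L] matter.  Measure: Lebesgue measure.\<close>

definition L2_on :: "real \<Rightarrow> (real \<Rightarrow> complex) \<Rightarrow> bool" where
  "L2_on L f \<longleftrightarrow> set_borel_measurable lebesgue {0..L} f \<and>
     set_integrable lebesgue {0..L} (\<lambda>x. (cmod (f x))^2)"

definition L2_norm_on :: "real \<Rightarrow> (real \<Rightarrow> complex) \<Rightarrow> real" where
  "L2_norm_on L f = sqrt (LINT x:{0..L}|lebesgue. (cmod (f x))^2)"

text \<open>z (the absolutely continuous representative) belongs to H^1(0,L) with weak derivative z'.\<close>
definition H1_deriv :: "real \<Rightarrow> (real \<Rightarrow> complex) \<Rightarrow> (real \<Rightarrow> complex) \<Rightarrow> bool" where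
  "H1_deriv L z z' \<longleftrightarrow> L2_on L z' \<and>
     (\<forall>x\<in>{0..L}. z x = z 0 + (LINT t:{0..x}|lebesgue. z' t))"

definition dom_A :: "real \<Rightarrow> (real \<Rightarrow> complex) \<Rightarrow> bool" where
  "dom_A L z \<longleftrightarrow> (\<exists>z'. H1_deriv L z z') \<and> z L = z 0"

definition gint :: "real \<Rightarrow> (real \<Rightarrow> complex) \<Rightarrow> (real \<Rightarrow> complex) \<Rightarrow> complex" where
  "gint L g z = (LINT y:{0..L}|lebesgue. cnj (g y) * z y)"

definition shifted_eq :: "real \<Rightarrow> (real \<Rightarrow> complex) \<Rightarrow> complex \<Rightarrow> (real \<Rightarrow> complex) \<Rightarrow> (real \<Rightarrow> complex) \<Rightarrow> bool" where
  "shifted_eq L g mu z f \<longleftrightarrow> dom_A L z \<and>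
     (\<exists>z'. H1_deriv L z z' \<and>
        (AE x in lebesgue. x \<in> {0..L} \<longrightarrow> mu * z x - (- z' x + gint L g z) = f x))"

definition in_resolvent :: "real \<Rightarrow> (real \<Rightarrow> complex) \<Rightarrow> complex \<Rightarrow> bool" where
  "in_resolvent L g mu \<longleftrightarrow>
     (\<forall>f. L2_on L f \<longrightarrow> (\<exists>z. shifted_eq L g mu z f)) \<and>
     (\<forall>z. shifted_eq L g mu z (\<lambda>_. 0) \<longrightarrow> (\<forall>x\<in>{0..L}. z x = 0)) \<and>
     (\<exists>C. \<forall>z f. L2_on L f \<longrightarrow> shifted_eq L g mu z f \<longrightarrow> L2_norm_on L z \<le> C * L2_norm_on L f)"

definition spectrum_A :: "real \<Rightarrow> (real \<Rightarrow> complex) \<Rightarrow> complex set" where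
  "spectrum_A L g = {mu. \<not> in_resolvent L g mu}"

definition w_fun :: "complex \<Rightarrow> real \<Rightarrow> complex" where
  "w_fun mu x = (if mu = 0 then complex_of_real x else (1 - exp (- mu * complex_of_real x)) / mu)"

definition H_mat :: "real \<Rightarrow> (real \<Rightarrow> complex) \<Rightarrow> complex \<Rightarrow> complex^2^2" where
  "H_mat L g mu = vector [
     vector [1 - exp (- mu * complex_of_real L), - w_fun mu L],
     vector [gint L g (\<lambda>x. exp (- mu * complex_of_real x)), gint L g (w_fun mu) - 1]]"

end

theory Submission
  imports Defs
begin

definition EE :: "complex \<Rightarrow> real \<Rightarrow> complex" where
  "EE mu x = exp (- mu * complex_of_real x)"

lemma EE_deriv: "(EE mu has_vector_derivative (- mu * EE mu x)) (at x within S)"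
proof -
  have "((\<lambda>z. exp (- mu * z)) has_field_derivative (- mu * exp (- mu * complex_of_real x))) (at (complex_of_real x))"
    by (auto intro!: derivative_eq_intros)
  from has_vector_derivative_real_field[OF this] show ?thesis unfolding EE_def by simp
qed

lemma W_deriv: "(w_fun mu has_vector_derivative EE mu x) (at x within S)"
proof (cases "mu = 0")
  case True
  then show ?thesis unfolding w_fun_def EE_def
    by (auto intro!: derivative_eq_intros)
next
  case False
  have "((\<lambda>x. (1 - exp (- mu * complex_of_real x)) / mu) has_vector_derivative EE mu x) (at x within S)"
  proof -
    have "((\<lambda>z. (1 - exp (- mu * z)) / mu) has_field_derivative EE mu x) (at (complex_of_real x))"
      using False unfolding EE_def by (auto intro!: derivative_eq_intros)
    from has_vector_derivative_real_field[OF this] show ?thesis by simp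
  qed
  then show ?thesis using False unfolding w_fun_def by simp
qed

lemma EE_W: "EE mu x = 1 - mu * w_fun mu x"
  by (simp add: EE_def w_fun_def)

lemma EE_cont: "continuous_on S (EE mu)"
  unfolding EE_def by (intro continuous_intros)

lemma W_cont: "continuous_on S (w_fun mu)"
  by (rule continuous_on_vector_derivative[OF W_deriv])

lemma EE_0[simp]: "EE mu 0 = 1" by (simp add: EE_def)
lemma W_0[simp]: "w_fun mu 0 = 0" by (simp add: w_fun_def)

lemma meas_iff: fixes f :: "real \<Rightarrow> 'b::real_normed_vector" shows "S \<in> sets lebesgue \<Longrightarrow> set_borel_measurable lebesgue S f \<longleftrightarrow> f \<in> borel_measurable (lebesgue_on S)"
  unfolding set_borel_measurable_def by (subst borel_measurable_restrict_space_iff) auto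

lemma L2_absint:
  assumes "L2_on L f" shows "f absolutely_integrable_on {0..L}"
proof (rule measurable_bounded_by_integrable_imp_absolutely_integrable)
  show "f \<in> borel_measurable (lebesgue_on {0..L})"
    using assms meas_iff[of "{0..L}" f] unfolding L2_on_def by simp
  show "{0..L} \<in> sets lebesgue" by simp
  have "(\<lambda>x. (cmod (f x))^2) integrable_on {0..L}"
    using assms unfolding L2_on_def using set_lebesgue_integral_eq_integral(1) by blast
  then show "(\<lambda>x. 1 + (cmod (f x))^2) integrable_on {0..L}"
    by (intro integrable_add) auto
  show "norm (f x) \<le> 1 + (cmod (f x))^2" for x
  proof -
    have "0 \<le> (cmod (f x) - 1/2)^2" by simp
    then show ?thesis by (simp add: power2_eq_square algebra_simps)
  qed
qed

lemma cont_L2: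
  assumes "continuous_on {0..L} h" shows "L2_on L h"
  unfolding L2_on_def
proof
  show "set_borel_measurable lebesgue {0..L} h"
    using meas_iff[of "{0..L}" h] continuous_imp_measurable_on_sets_lebesgue[OF assms] by simp
  have "continuous_on {0..L} (\<lambda>x. (cmod (h x))^2)"
    by (intro continuous_intros assms)
  then show "set_integrable lebesgue {0..L} (\<lambda>x. (cmod (h x))\<^sup>2)"
    using absolutely_integrable_continuous_real by blast
qed

lemma L2_add_cont:
  assumes f: "L2_on L f" and h: "continuous_on {0..L} h"
  shows "L2_on L (\<lambda>x. f x + h x)"
  unfolding L2_on_def
proof
  have fm: "f \<in> borel_measurable (lebesgue_on {0..L})"
    using f meas_iff[of "{0..L}" f] unfolding L2_on_def by simp
  have hm: "h \<in> borel_measurable (lebesgue_on {0..L})"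
    using continuous_imp_measurable_on_sets_lebesgue[OF h] by simp
  have sm: "(\<lambda>x. f x + h x) \<in> borel_measurable (lebesgue_on {0..L})"
    using fm hm by (rule borel_measurable_add)
  have eq: "set_borel_measurable lebesgue {0..L} (\<lambda>x. f x + h x) \<longleftrightarrow> (\<lambda>x. f x + h x) \<in> borel_measurable (lebesgue_on {0..L})"
    by (rule meas_iff) simp
  with sm show "set_borel_measurable lebesgue {0..L} (\<lambda>x. f x + h x)" by blast
  show "set_integrable lebesgue {0..L} (\<lambda>x. (cmod (f x + h x))\<^sup>2)"
  proof (rule measurable_bounded_by_integrable_imp_absolutely_integrable)
    show "(\<lambda>x. (cmod (f x + h x))\<^sup>2) \<in> borel_measurable (lebesgue_on {0..L})"
      using sm by measurable
    show "{0..L} \<in> sets lebesgue" by simp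
    have i1: "(\<lambda>x. (cmod (f x))^2) integrable_on {0..L}"
      using f unfolding L2_on_def using set_lebesgue_integral_eq_integral(1) by blast
    have "continuous_on {0..L} (\<lambda>x. (cmod (h x))^2)"
      by (intro continuous_intros h)
    then have i2: "(\<lambda>x. (cmod (h x))^2) integrable_on {0..L}"
      by (simp add: integrable_continuous_real)
    show "(\<lambda>x. 2 * (cmod (f x))^2 + 2 * (cmod (h x))^2) integrable_on {0..L}"
    proof -
      have "(\<lambda>x. 2 *\<^sub>R (cmod (f x))^2 + 2 *\<^sub>R (cmod (h x))^2) integrable_on {0..L}"
        by (intro integrable_add integrable_cmul i1 i2)
      then show ?thesis by simp
    qed
    show "norm ((cmod (f x + h x))\<^sup>2) \<le> 2 * (cmod (f x))^2 + 2 * (cmod (h x))^2" for x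
    proof -
      have "cmod (f x + h x) \<le> cmod (f x) + cmod (h x)" by (rule norm_triangle_ineq)
      then have "(cmod (f x + h x))^2 \<le> (cmod (f x) + cmod (h x))^2"
        by (simp add: power_mono)
      also have "\<dots> \<le> 2 * (cmod (f x))^2 + 2 * (cmod (h x))^2"
        using sum_squares_bound[of "cmod (f x)" "cmod (h x)"] by (simp add: power2_eq_square algebra_simps)
      finally show ?thesis by simp
    qed
  qed
qed

lemma absint_sub: fixes f :: "real \<Rightarrow> complex" shows "f absolutely_integrable_on {0..L} \<Longrightarrow> x \<le> L \<Longrightarrow> f absolutely_integrable_on {0..x}"
proof -
  assume a: "f absolutely_integrable_on {0..L}" "x \<le> L"
  have "{0..x} \<in> sets lebesgue" by simp
  then show ?thesis by (rule set_integrable_subset[OF a(1)]) (use a(2) in auto)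
qed

definition PP :: "(real \<Rightarrow> complex) \<Rightarrow> real \<Rightarrow> complex" where
  "PP f x = integral {0..x} f"

lemma PP_cont: fixes f :: "real \<Rightarrow> complex" shows "f absolutely_integrable_on {0..L} \<Longrightarrow> continuous_on {0..L} (PP f)"
  unfolding PP_def
  by (rule indefinite_integral_continuous_1) (rule set_lebesgue_integral_eq_integral(1))

lemma gprod:
  assumes g: "L2_on L g" and h: "continuous_on {0..L} h"
  shows "(\<lambda>y. cnj (g y) * h y) absolutely_integrable_on {0..L}"
proof -
  have ga: "g absolutely_integrable_on {0..L}" using L2_absint g by blast
  have "(\<lambda>y. cnj (g y)) absolutely_integrable_on {0..L}"
    using ga unfolding set_integrable_def
    using complex_integrable_cnj[of lebesgue "\<lambda>x. indicator {0..L} x *\<^sub>R g x"] by simp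
  then have "(\<lambda>y. h y * cnj (g y)) absolutely_integrable_on {0..L}"
    by (intro absolutely_integrable_bounded_measurable_product[OF bilinear_times])
      (auto intro: continuous_imp_measurable_on_sets_lebesgue h compact_imp_bounded compact_continuous_image)
  then show ?thesis by (simp add: mult.commute)
qed

lemma gint_lin:
  assumes g: "L2_on L g" and h1: "continuous_on {0..L} h1" and h2: "continuous_on {0..L} h2"
    and h3: "continuous_on {0..L} h3"
  shows "gint L g (\<lambda>x. a * h1 x + b * h2 x + h3 x) = a * gint L g h1 + b * gint L g h2 + gint L g h3"
proof -
  have i1: "set_integrable lebesgue {0..L} (\<lambda>y. a * (cnj (g y) * h1 y))" using gprod[OF g h1] by auto
  have i2: "set_integrable lebesgue {0..L} (\<lambda>y. b * (cnj (g y) * h2 y))" using gprod[OF g h2] by auto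
  have i3: "set_integrable lebesgue {0..L} (\<lambda>y. (cnj (g y) * h3 y))" using gprod[OF g h3] by auto
  have "gint L g (\<lambda>x. a * h1 x + b * h2 x + h3 x) =
     (LINT y:{0..L}|lebesgue. a * (cnj (g y) * h1 y) + b * (cnj (g y) * h2 y) + cnj (g y) * h3 y)"
    unfolding gint_def by (simp add: algebra_simps)
  also have "\<dots> = a * gint L g h1 + b * gint L g h2 + gint L g h3"
    unfolding gint_def
    using set_integral_add(2)[OF set_integral_add(1)[OF i1 i2] i3] set_integral_add(2)[OF i1 i2] by simp
  finally show ?thesis .
qed

lemma gint_cong: "(\<And>x. x \<in> {0..L} \<Longrightarrow> z x = z2 x) \<Longrightarrow> gint L g z = gint L g z2"
  unfolding gint_def by (rule set_lebesgue_integral_cong) auto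

lemma EE_inv: "EE (- mu) x * EE mu x = 1"
  by (simp add: EE_def exp_minus[symmetric] exp_add[symmetric] algebra_simps)

lemma EE_nz: "EE mu x \<noteq> 0" by (simp add: EE_def)

lemma ode_zero:
  fixes u :: "real \<Rightarrow> complex"
  assumes d: "\<And>x. x \<in> {0..L} \<Longrightarrow> (u has_vector_derivative (- mu * u x)) (at x within {0..L})"
    and u0: "u 0 = 0" and x: "x \<in> {0..L}"
  shows "u x = 0"
proof -
  define v where "v x = EE (- mu) x * u x" for x
  have dv: "(v has_vector_derivative 0) (at y within {0..L})" if y: "y \<in> {0..L}" for y
  proof -
    have "(v has_vector_derivative (EE (- mu) y * (- mu * u y) + (- (- mu) * EE (- mu) y) * u y)) (at y within {0..L})"
      unfolding v_def by (rule has_vector_derivative_mult[OF EE_deriv d[OF y]])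
    then show ?thesis by (simp add: algebra_simps)
  qed
  have cv: "continuous_on {0..L} v"
    by (rule continuous_on_vector_derivative) (use dv in auto)
  have "v x = 0"
  proof (rule has_derivative_zero_unique_strong_interval[of "{}" 0 L v])
    show "v 0 = 0" by (simp add: v_def u0)
    show "(v has_derivative (\<lambda>h. 0)) (at y within {0..L})" if "y \<in> {0..L} - {}" for y
      using dv[of y] that by (simp add: has_vector_derivative_def)
  qed (use cv x in auto)
  then show ?thesis by (simp add: v_def EE_nz)
qed

definition YY :: "complex \<Rightarrow> (real \<Rightarrow> complex) \<Rightarrow> real \<Rightarrow> complex" where
  "YY mu f x = - mu * EE mu x * integral {0..x} (\<lambda>s. EE (- mu) s * PP f s)"

definition FF :: "complex \<Rightarrow> (real \<Rightarrow> complex) \<Rightarrow> real \<Rightarrow> complex" where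
  "FF mu f x = PP f x + YY mu f x"

lemma YY_deriv:
  fixes f :: "real \<Rightarrow> complex"
  assumes f: "f absolutely_integrable_on {0..L}" and x: "x \<in> {0..L}"
  shows "(YY mu f has_vector_derivative (- mu * (YY mu f x + PP f x))) (at x within {0..L})"
proof -
  have ck: "continuous_on {0..L} (\<lambda>s. EE (- mu) s * PP f s)"
    by (intro continuous_intros EE_cont PP_cont f)
  have dI: "((\<lambda>u. integral {0..u} (\<lambda>s. EE (- mu) s * PP f s)) has_vector_derivative (EE (- mu) x * PP f x)) (at x within {0..L})"
    by (rule integral_has_vector_derivative[OF ck x])
  have D: "((\<lambda>y. (- mu) * (EE mu y * integral {0..y} (\<lambda>s. EE (- mu) s * PP f s))) has_vector_derivative
      (- mu) * (EE mu x * (EE (- mu) x * PP f x) + (- mu * EE mu x) * integral {0..x} (\<lambda>s. EE (- mu) s * PP f s))) (at x within {0..L})"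
    by (rule has_vector_derivative_mult_right has_vector_derivative_mult[OF EE_deriv dI])+
  have V: "(- mu) * (EE mu x * (EE (- mu) x * PP f x) + (- mu * EE mu x) * integral {0..x} (\<lambda>s. EE (- mu) s * PP f s))
     = - mu * (YY mu f x + PP f x)"
    using EE_inv[of mu x] unfolding YY_def by (simp add: algebra_simps)
  have fe: "(\<lambda>y. (- mu) * (EE mu y * integral {0..y} (\<lambda>s. EE (- mu) s * PP f s))) = YY mu f"
    by (rule ext) (simp add: YY_def)
  from D show ?thesis by (simp only: V fe)
qed

lemma YY_cont:
  fixes f :: "real \<Rightarrow> complex"
  assumes f: "f absolutely_integrable_on {0..L}"
  shows "continuous_on {0..L} (YY mu f)"
  by (rule continuous_on_vector_derivative) (use YY_deriv[OF f] in auto)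

lemma FF_cont:
  fixes f :: "real \<Rightarrow> complex"
  assumes f: "f absolutely_integrable_on {0..L}"
  shows "continuous_on {0..L} (FF mu f)"
  unfolding FF_def by (intro continuous_intros YY_cont PP_cont f)

lemma FF_0[simp]: "FF mu f 0 = 0"
  by (simp add: FF_def YY_def PP_def)

lemma FF_zero[simp]: "FF mu (\<lambda>_. 0) x = 0"
  by (simp add: FF_def YY_def PP_def)

lemma G_deriv:
  fixes f :: "real \<Rightarrow> complex"
  assumes f: "f absolutely_integrable_on {0..L}" and x: "x \<in> {0..L}"
  shows "((\<lambda>y. a * EE mu y + c * w_fun mu y + YY mu f y) has_vector_derivative
     (c - mu * (a * EE mu x + c * w_fun mu x + FF mu f x))) (at x within {0..L})"
proof -
  have D: "((\<lambda>y. a * EE mu y + c * w_fun mu y + YY mu f y) has_vector_derivative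
     (a * (- mu * EE mu x) + c * EE mu x + (- mu * (YY mu f x + PP f x)))) (at x within {0..L})"
    by (intro has_vector_derivative_add has_vector_derivative_mult_right EE_deriv W_deriv YY_deriv f x)
  have "a * (- mu * EE mu x) + c * EE mu x + (- mu * (YY mu f x + PP f x)) = c - mu * (a * EE mu x + c * w_fun mu x + FF mu f x)"
    unfolding FF_def by (subst (2) EE_W) (simp add: algebra_simps)
  with D show ?thesis by simp
qed

lemma cont_absint: "continuous_on {0..L} (h :: real \<Rightarrow> complex) \<Longrightarrow> x \<le> L \<Longrightarrow> h absolutely_integrable_on {0..x}"
  by (rule absint_sub) (auto intro: absolutely_integrable_continuous_real)

lemma char2:
  fixes g f z :: "real \<Rightarrow> complex"
  assumes L: "L > 0" and g: "L2_on L g" and f: "L2_on L f"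
    and r1: "(1 - EE mu L) * a - w_fun mu L * c = FF mu f L"
    and r2: "gint L g (EE mu) * a + (gint L g (w_fun mu) - 1) * c = - gint L g (FF mu f)"
    and zf: "\<forall>x\<in>{0..L}. z x = a * EE mu x + c * w_fun mu x + FF mu f x"
  shows "shifted_eq L g mu z f"
proof -
  have fa: "f absolutely_integrable_on {0..L}" using L2_absint[OF f] .
  define form where "form x = a * EE mu x + c * w_fun mu x + FF mu f x" for x
  define k where "k x = c - mu * form x" for x
  have cform: "continuous_on {0..L} form"
    unfolding form_def by (intro continuous_intros EE_cont W_cont FF_cont fa)
  have ck: "continuous_on {0..L} k"
    unfolding k_def by (intro continuous_intros cform)
  define z' where "z' x = f x + k x" for x
  have z'L2: "L2_on L z'" unfolding z'_def by (rule L2_add_cont[OF f ck])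
  have z0: "z 0 = a" using zf L by (simp add: FF_0)
  have H1: "H1_deriv L z z'"
    unfolding H1_deriv_def
  proof (intro conjI ballI z'L2)
    fix x assume x: "x \<in> {0..L}"
    have fx: "f absolutely_integrable_on {0..x}" using absint_sub[OF fa] x by auto
    have kx: "k absolutely_integrable_on {0..x}" using cont_absint[OF ck] x by auto
    have "(LINT t:{0..x}|lebesgue. z' t) = (LINT t:{0..x}|lebesgue. f t) + (LINT t:{0..x}|lebesgue. k t)"
      unfolding z'_def by (rule set_integral_add(2)[OF fx kx])
    also have "\<dots> = PP f x + integral {0..x} k"
      unfolding PP_def by (simp add: set_lebesgue_integral_eq_integral(2)[OF fx] set_lebesgue_integral_eq_integral(2)[OF kx])
    also have "integral {0..x} k = (a * EE mu x + c * w_fun mu x + YY mu f x) - (a * EE mu 0 + c * w_fun mu 0 + YY mu f 0)"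
    proof (rule integral_unique, rule fundamental_theorem_of_calculus)
      show "0 \<le> x" using x by auto
      fix y assume y: "y \<in> {0..x}"
      have "y \<in> {0..L}" using x y by auto
      from G_deriv[OF fa this, where a=a and c=c and mu=mu]
      have "((\<lambda>y. a * EE mu y + c * w_fun mu y + YY mu f y) has_vector_derivative k y) (at y within {0..L})"
        by (simp add: k_def form_def)
      then show "((\<lambda>y. a * EE mu y + c * w_fun mu y + YY mu f y) has_vector_derivative k y) (at y within {0..x})"
        by (rule has_vector_derivative_within_subset) (use x in auto)
    qed
    finally have eq: "(LINT t:{0..x}|lebesgue. z' t) = PP f x + ((a * EE mu x + c * w_fun mu x + YY mu f x) - (a * EE mu 0 + c * w_fun mu 0 + YY mu f 0))" .
    have zx: "z x = a * EE mu x + c * w_fun mu x + FF mu f x" using zf x by blast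
    have Y0: "YY mu f 0 = 0" by (simp add: YY_def)
    show "z x = z 0 + (LINT t:{0..x}|lebesgue. z' t)"
      unfolding eq zx z0 Y0 FF_def by simp
  qed
  have zL: "z L = z 0"
    using zf L z0 r1 by (simp add: algebra_simps)
  have gz: "gint L g z = c"
  proof -
    have "gint L g z = gint L g form" by (rule gint_cong) (use zf in \<open>simp add: form_def\<close>)
    also have "\<dots> = a * gint L g (EE mu) + c * gint L g (w_fun mu) + gint L g (FF mu f)"
      unfolding form_def by (rule gint_lin[OF g EE_cont W_cont FF_cont[OF fa]])
    finally show ?thesis using r2 by (simp add: algebra_simps)
  qed
  show ?thesis
    unfolding shifted_eq_def dom_A_def
  proof (intro conjI exI[of _ z'] H1 zL)
    show "AE x in lebesgue. x \<in> {0..L} \<longrightarrow> mu * z x - (- z' x + gint L g z) = f x"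
      by (rule AE_I2) (auto simp: gz zf z'_def k_def form_def algebra_simps)
  qed
qed

lemma char1:
  fixes g f z :: "real \<Rightarrow> complex"
  assumes L: "L > 0" and g: "L2_on L g" and f: "L2_on L f"
    and sh: "shifted_eq L g mu z f"
  shows "\<exists>a c. (1 - EE mu L) * a - w_fun mu L * c = FF mu f L \<and>
     gint L g (EE mu) * a + (gint L g (w_fun mu) - 1) * c = - gint L g (FF mu f) \<and>
     (\<forall>x\<in>{0..L}. z x = a * EE mu x + c * w_fun mu x + FF mu f x)"
proof -
  have fa: "f absolutely_integrable_on {0..L}" using L2_absint[OF f] .
  from sh obtain z' where zL: "z L = z 0" and H1: "H1_deriv L z z'"
    and ae: "AE x in lebesgue. x \<in> {0..L} \<longrightarrow> mu * z x - (- z' x + gint L g z) = f x"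
    unfolding shifted_eq_def dom_A_def by blast
  have z'L2: "L2_on L z'" and zi: "\<And>x. x \<in> {0..L} \<Longrightarrow> z x = z 0 + (LINT t:{0..x}|lebesgue. z' t)"
    using H1 unfolding H1_deriv_def by blast+
  have z'a: "z' absolutely_integrable_on {0..L}" using L2_absint[OF z'L2] .
  define a where "a = z 0"
  define c where "c = gint L g z"
  have zi2: "z x = a + integral {0..x} z'" if x: "x \<in> {0..L}" for x
  proof -
    have "(LINT t:{0..x}|lebesgue. z' t) = integral {0..x} z'"
      using set_lebesgue_integral_eq_integral(2)[OF absint_sub[OF z'a]] x by simp
    then show ?thesis using zi[OF x] unfolding a_def by simp
  qed
  have zc: "continuous_on {0..L} z"
  proof -
    have "continuous_on {0..L} (\<lambda>x. a + integral {0..x} z')"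
      by (intro continuous_intros indefinite_integral_continuous_1 set_lebesgue_integral_eq_integral(1)[OF z'a])
    then show ?thesis using continuous_on_cong zi2 by (metis (no_types, lifting))
  qed
  define k where "k x = c - mu * z x" for x
  have ck: "continuous_on {0..L} k" unfolding k_def by (intro continuous_intros zc)
  have ae2: "AE t in lebesgue. t \<in> {0..L} \<longrightarrow> z' t = f t + k t"
    using ae by eventually_elim (auto simp: k_def c_def algebra_simps)
  define I where "I y = integral {0..y} k" for y
  have zi3: "z x = a + PP f x + I x" if x: "x \<in> {0..L}" for x
  proof -
    have fx: "f absolutely_integrable_on {0..x}" using absint_sub[OF fa] x by auto
    have kx: "k absolutely_integrable_on {0..x}" using cont_absint[OF ck] x by auto
    have z'x: "z' absolutely_integrable_on {0..x}" using absint_sub[OF z'a] x by auto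
    have fkx: "(\<lambda>t. f t + k t) absolutely_integrable_on {0..x}" using fx kx by (rule set_integral_add(1))
    have "(LINT t:{0..x}|lebesgue. z' t) = (LINT t:{0..x}|lebesgue. f t + k t)"
      unfolding set_lebesgue_integral_def
    proof (rule integral_cong_AE)
      show "(\<lambda>t. indicat_real {0..x} t *\<^sub>R z' t) \<in> borel_measurable lebesgue"
        using z'x unfolding set_integrable_def by (rule borel_measurable_integrable)
      show "(\<lambda>t. indicat_real {0..x} t *\<^sub>R (f t + k t)) \<in> borel_measurable lebesgue"
        using fkx unfolding set_integrable_def by (rule borel_measurable_integrable)
      show "AE t in lebesgue. indicat_real {0..x} t *\<^sub>R z' t = indicat_real {0..x} t *\<^sub>R (f t + k t)"
        using ae2 by eventually_elim (use x in \<open>auto simp: indicator_def\<close>)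
    qed
    also have "\<dots> = (LINT t:{0..x}|lebesgue. f t) + (LINT t:{0..x}|lebesgue. k t)"
      by (rule set_integral_add(2)[OF fx kx])
    also have "\<dots> = PP f x + I x"
      unfolding PP_def I_def by (simp add: set_lebesgue_integral_eq_integral(2)[OF fx] set_lebesgue_integral_eq_integral(2)[OF kx])
    finally show ?thesis using zi[OF x] by (simp add: a_def)
  qed
  define u where "u y = a + I y - (a * EE mu y + c * w_fun mu y + YY mu f y)" for y
  have du: "(u has_vector_derivative (- mu * u y)) (at y within {0..L})" if y: "y \<in> {0..L}" for y
  proof -
    have dI: "(I has_vector_derivative k y) (at y within {0..L})"
      unfolding I_def by (rule integral_has_vector_derivative[OF ck y])
    have D: "(u has_vector_derivative (k y - (c - mu * (a * EE mu y + c * w_fun mu y + FF mu f y)))) (at y within {0..L})"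
      unfolding u_def
      by (rule has_vector_derivative_diff[OF _ G_deriv[OF fa y]], rule has_vector_derivative_add[OF has_vector_derivative_const dI, simplified])
    have "k y - (c - mu * (a * EE mu y + c * w_fun mu y + FF mu f y)) = - mu * u y"
      unfolding k_def u_def FF_def zi3[OF y] by (simp add: algebra_simps)
    with D show ?thesis by simp
  qed
  have u0: "u 0 = 0" by (simp add: u_def I_def YY_def)
  have zform: "\<forall>x\<in>{0..L}. z x = a * EE mu x + c * w_fun mu x + FF mu f x"
  proof
    fix x assume x: "x \<in> {0..L}"
    have "u x = 0" by (rule ode_zero[OF du u0 x])
    then show "z x = a * EE mu x + c * w_fun mu x + FF mu f x"
      using zi3[OF x] unfolding u_def FF_def by (simp add: algebra_simps)
  qed
  have r1: "(1 - EE mu L) * a - w_fun mu L * c = FF mu f L"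
  proof -
    have e1: "z L = a * EE mu L + c * w_fun mu L + FF mu f L" using zform L by auto
    have "z L = a" using zL by (simp add: a_def)
    with e1 show ?thesis by (simp add: algebra_simps)
  qed
  have r2: "gint L g (EE mu) * a + (gint L g (w_fun mu) - 1) * c = - gint L g (FF mu f)"
  proof -
    have "gint L g z = gint L g (\<lambda>x. a * EE mu x + c * w_fun mu x + FF mu f x)"
      by (rule gint_cong) (use zform in simp)
    then have "c = gint L g (\<lambda>x. a * EE mu x + c * w_fun mu x + FF mu f x)"
      by (simp add: c_def)
    also have "\<dots> = a * gint L g (EE mu) + c * gint L g (w_fun mu) + gint L g (FF mu f)"
      by (rule gint_lin[OF g EE_cont W_cont FF_cont[OF fa]])
    finally show ?thesis by (simp add: algebra_simps)
  qed
  show ?thesis using r1 r2 zform by blast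
qed

lemma sup_L2:
  fixes z :: "real \<Rightarrow> complex"
  assumes L: "L \<ge> 0" and B: "B \<ge> 0" and zb: "\<forall>x\<in>{0..L}. cmod (z x) \<le> B"
  shows "L2_norm_on L z \<le> sqrt L * B"
proof -
  have "(LINT x:{0..L}|lebesgue. (cmod (z x))^2) \<le> L * B^2"
  proof (cases "set_integrable lebesgue {0..L} (\<lambda>x. (cmod (z x))^2)")
    case True
    have "(LINT x:{0..L}|lebesgue. (cmod (z x))^2) = integral {0..L} (\<lambda>x. (cmod (z x))^2)"
      by (rule set_lebesgue_integral_eq_integral(2)[OF True])
    also have "\<dots> \<le> integral {0..L} (\<lambda>x. B^2)"
    proof (rule integral_le)
      show "(\<lambda>x. (cmod (z x))^2) integrable_on {0..L}" by (rule set_lebesgue_integral_eq_integral(1)[OF True])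
      show "(\<lambda>x. B^2) integrable_on {0..L}" by (rule integrable_const_ivl)
      fix x assume "x \<in> {0..L}"
      then have "cmod (z x) \<le> B" using zb by blast
      then show "(cmod (z x))^2 \<le> B^2" by (simp add: power_mono)
    qed
    also have "\<dots> = L * B^2" using L by simp
    finally show ?thesis .
  next
    case False
    then have "(LINT x:{0..L}|lebesgue. (cmod (z x))^2) = 0"
      unfolding set_lebesgue_integral_def set_integrable_def by (rule not_integrable_integral_eq)
    then show ?thesis using L B by simp
  qed
  then have "L2_norm_on L z \<le> sqrt (L * B^2)" unfolding L2_norm_on_def by (rule real_sqrt_le_mono)
  also have "\<dots> = sqrt L * B" using B by (simp add: real_sqrt_mult)
  finally show ?thesis .
qed

lemma CS:
  fixes f :: "real \<Rightarrow> complex"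
  assumes L: "L > 0" and f: "L2_on L f"
  shows "integral {0..L} (\<lambda>t. cmod (f t)) \<le> sqrt L * L2_norm_on L f"
proof -
  have fa: "f absolutely_integrable_on {0..L}" using L2_absint[OF f] .
  have i1: "(\<lambda>t. cmod (f t)) integrable_on {0..L}" using fa absolutely_integrable_on_def by blast
  have s2: "set_integrable lebesgue {0..L} (\<lambda>x. (cmod (f x))^2)" using f unfolding L2_on_def by blast
  have i2: "(\<lambda>t. (cmod (f t))^2) integrable_on {0..L}" by (rule set_lebesgue_integral_eq_integral(1)[OF s2])
  define Q where "Q = integral {0..L} (\<lambda>t. (cmod (f t))^2)"
  define N where "N = integral {0..L} (\<lambda>t. cmod (f t))"
  have nrm: "L2_norm_on L f = sqrt Q"
    unfolding L2_norm_on_def Q_def using set_lebesgue_integral_eq_integral(2)[OF s2] by simp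
  have Q0: "Q \<ge> 0" unfolding Q_def by (rule integral_nonneg[OF i2]) auto
  have key: "N \<le> (t * L + Q / t) / 2" if t: "t > 0" for t
  proof -
    have "N \<le> integral {0..L} (\<lambda>x. (t + (cmod (f x))^2 / t) / 2)"
      unfolding N_def
    proof (rule integral_le[OF i1])
      show "(\<lambda>x. (t + (cmod (f x))^2 / t) / 2) integrable_on {0..L}"
        by (intro integrable_on_divide integrable_add integrable_const_ivl i2)
      fix x
      have "0 \<le> (cmod (f x) - t)^2" by simp
      then have "2 * t * cmod (f x) \<le> t^2 + (cmod (f x))^2" by (simp add: power2_eq_square algebra_simps)
      then show "cmod (f x) \<le> (t + (cmod (f x))^2 / t) / 2" using t
        by (simp add: field_simps power2_eq_square)
    qed
    also have "\<dots> = (t * L + Q / t) / 2"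
    proof -
      have "integral {0..L} (\<lambda>x. (t + (cmod (f x))^2 / t) / 2) = (integral {0..L} (\<lambda>x. t) + integral {0..L} (\<lambda>x. (cmod (f x))^2) / t) / 2"
        using i2 by (simp add: integral_add integrable_on_divide integrable_const_ivl integral_divide)
      then show ?thesis using L by (simp add: Q_def mult.commute)
    qed
    finally show ?thesis .
  qed
  show ?thesis
  proof (cases "Q > 0")
    case True
    define t where "t = sqrt Q / sqrt L"
    have t: "t > 0" using True L by (simp add: t_def)
    have "(t * L + Q / t) / 2 = sqrt L * sqrt Q"
    proof -
      have sL: "sqrt L * sqrt L = L" using L by simp
      have sQ: "sqrt Q * sqrt Q = Q" using Q0 by simp
      have "t * L = sqrt L * sqrt Q" unfolding t_def using L sL by (simp add: field_simps)
      moreover have "Q / t = sqrt L * sqrt Q" unfolding t_def using L True sQ by (simp add: field_simps)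
      ultimately show ?thesis by simp
    qed
    then show ?thesis using key[OF t] nrm N_def by simp
  next
    case False
    then have Qz: "Q = 0" using Q0 by simp
    have "N \<le> 0"
    proof (rule ccontr)
      assume "\<not> N \<le> 0"
      then have "N / L > 0" using L by simp
      from key[OF this] have "N \<le> N / 2" using L Qz by simp
      with \<open>\<not> N \<le> 0\<close> show False by simp
    qed
    then show ?thesis using nrm Qz N_def by simp
  qed
qed

lemma cont_bound:
  fixes h :: "real \<Rightarrow> complex"
  assumes "continuous_on {0..L} h"
  obtains B where "B > 0" "\<forall>x\<in>{0..L}. cmod (h x) \<le> B"
proof -
  have "bounded (h ` {0..L})" by (rule compact_imp_bounded[OF compact_continuous_image[OF assms compact_Icc]])
  then obtain B where "B > 0" "\<forall>y\<in>h ` {0..L}. norm y \<le> B" using bounded_pos by blast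
  then show ?thesis using that by auto
qed

lemma PP_bound:
  fixes f :: "real \<Rightarrow> complex"
  assumes fa: "f absolutely_integrable_on {0..L}" and x: "x \<in> {0..L}"
  shows "cmod (PP f x) \<le> integral {0..L} (\<lambda>t. cmod (f t))"
proof -
  have fx: "f absolutely_integrable_on {0..x}" using absint_sub[OF fa] x by auto
  have n1: "(\<lambda>t. cmod (f t)) integrable_on {0..x}" using fx absolutely_integrable_on_def by blast
  have n2: "(\<lambda>t. cmod (f t)) integrable_on {0..L}" using fa absolutely_integrable_on_def by blast
  have "cmod (PP f x) \<le> integral {0..x} (\<lambda>t. cmod (f t))"
    unfolding PP_def by (rule integral_norm_bound_integral) (use fx absolutely_integrable_on_def n1 in auto)
  also have "\<dots> \<le> integral {0..L} (\<lambda>t. cmod (f t))"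
    by (rule integral_subset_le) (use x n1 n2 in auto)
  finally show ?thesis .
qed

lemma FF_bound:
  assumes L: "L > 0"
  shows "\<exists>K \<ge> 0. \<forall>f :: real \<Rightarrow> complex. f absolutely_integrable_on {0..L} \<longrightarrow>
     (\<forall>x\<in>{0..L}. cmod (FF mu f x) \<le> K * integral {0..L} (\<lambda>t. cmod (f t)))"
proof -
  obtain B1 where B1: "B1 > 0" "\<forall>x\<in>{0..L}. cmod (EE mu x) \<le> B1" using cont_bound[OF EE_cont] by blast
  obtain B2 where B2: "B2 > 0" "\<forall>x\<in>{0..L}. cmod (EE (- mu) x) \<le> B2" using cont_bound[OF EE_cont] by blast
  define K where "K = 1 + cmod mu * B1 * B2 * L"
  have K0: "K \<ge> 0" unfolding K_def using B1 B2 L by simp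
  show ?thesis
  proof (intro exI[of _ K] conjI K0 allI impI ballI)
    fix f :: "real \<Rightarrow> complex" and x
    assume fa: "f absolutely_integrable_on {0..L}" and x: "x \<in> {0..L}"
    define N where "N = integral {0..L} (\<lambda>t. cmod (f t))"
    have N0: "N \<ge> 0" unfolding N_def
      by (rule integral_nonneg) (use fa absolutely_integrable_on_def in auto)
    have Pb: "cmod (PP f y) \<le> N" if "y \<in> {0..L}" for y unfolding N_def by (rule PP_bound[OF fa that])
    have ci: "continuous_on {0..x} (\<lambda>s. EE (- mu) s * PP f s)"
      by (rule continuous_on_subset[of "{0..L}"]) (use x in \<open>auto intro!: continuous_intros EE_cont PP_cont fa\<close>)
    have "cmod (integral {0..x} (\<lambda>s. EE (- mu) s * PP f s)) \<le> (B2 * N) * (x - 0)"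
    proof (rule integral_bound)
      show "0 \<le> x" using x by auto
      show "continuous_on {0..x} (\<lambda>s. EE (- mu) s * PP f s)" by (rule ci)
      fix t assume t: "t \<in> {0..x}"
      then have tL: "t \<in> {0..L}" using x by auto
      have "cmod (EE (- mu) t * PP f t) = cmod (EE (- mu) t) * cmod (PP f t)" by (simp add: norm_mult)
      also have "\<dots> \<le> B2 * N" using B2 Pb[OF tL] tL by (intro mult_mono) auto
      finally show "cmod (EE (- mu) t * PP f t) \<le> B2 * N" .
    qed
    also have "\<dots> \<le> B2 * N * L" using x B2 N0 by (intro mult_left_mono) auto
    finally have Ib: "cmod (integral {0..x} (\<lambda>s. EE (- mu) s * PP f s)) \<le> B2 * N * L" .
    have "cmod (YY mu f x) = cmod mu * cmod (EE mu x) * cmod (integral {0..x} (\<lambda>s. EE (- mu) s * PP f s))"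
      unfolding YY_def by (simp add: norm_mult)
    also have "\<dots> \<le> cmod mu * B1 * (B2 * N * L)"
      using B1 x Ib by (intro mult_mono) (auto intro: mult_left_mono)
    finally have Yb: "cmod (YY mu f x) \<le> cmod mu * B1 * (B2 * N * L)" .
    have "cmod (FF mu f x) \<le> cmod (PP f x) + cmod (YY mu f x)" unfolding FF_def by (rule norm_triangle_ineq)
    also have "\<dots> \<le> N + cmod mu * B1 * (B2 * N * L)" using Pb[OF x] Yb by linarith
    also have "\<dots> = K * N" unfolding K_def by (simp add: algebra_simps)
    finally show "cmod (FF mu f x) \<le> K * integral {0..L} (\<lambda>t. cmod (f t))" unfolding N_def .
  qed
qed

lemma gint_bound:
  fixes g h :: "real \<Rightarrow> complex"
  assumes g: "L2_on L g" and h: "continuous_on {0..L} h" and hb: "\<forall>x\<in>{0..L}. cmod (h x) \<le> M"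
  shows "cmod (gint L g h) \<le> M * integral {0..L} (\<lambda>t. cmod (g t))"
proof -
  have pa: "(\<lambda>y. cnj (g y) * h y) absolutely_integrable_on {0..L}" by (rule gprod[OF g h])
  have ga: "g absolutely_integrable_on {0..L}" by (rule L2_absint[OF g])
  have gn: "(\<lambda>t. cmod (g t)) integrable_on {0..L}" using ga absolutely_integrable_on_def by blast
  have "gint L g h = integral {0..L} (\<lambda>y. cnj (g y) * h y)"
    unfolding gint_def by (rule set_lebesgue_integral_eq_integral(2)[OF pa])
  also have "cmod \<dots> \<le> integral {0..L} (\<lambda>t. M * cmod (g t))"
  proof (rule integral_norm_bound_integral)
    show "(\<lambda>y. cnj (g y) * h y) integrable_on {0..L}" by (rule set_lebesgue_integral_eq_integral(1)[OF pa])
    show "(\<lambda>t. M * cmod (g t)) integrable_on {0..L}" using integrable_cmul[OF gn, of M] by simp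
    fix x assume x: "x \<in> {0..L}"
    have "cmod (cnj (g x) * h x) = cmod (h x) * cmod (g x)" by (simp add: norm_mult)
    also have "\<dots> \<le> M * cmod (g x)" using hb x by (intro mult_right_mono) auto
    finally show "cmod (cnj (g x) * h x) \<le> M * cmod (g x)" .
  qed
  also have "\<dots> = M * integral {0..L} (\<lambda>t. cmod (g t))"
    using integral_mult_right by simp
  finally show ?thesis .
qed

lemma Hmat_mul: "H_mat L g mu *v v = 0 \<longleftrightarrow>
   (1 - EE mu L) * v$1 + (- w_fun mu L) * v$2 = 0 \<and> gint L g (EE mu) * v$1 + (gint L g (w_fun mu) - 1) * v$2 = 0"
  unfolding H_mat_def EE_def by (simp add: vec_eq_iff forall_2 matrix_vector_mult_def sum_2)

lemma ker2x2:
  fixes p q r s :: complex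
  assumes "p * s - q * r = 0"
  shows "\<exists>a c. (a \<noteq> 0 \<or> c \<noteq> 0) \<and> p * a + q * c = 0 \<and> r * a + s * c = 0"
proof (cases "q \<noteq> 0 \<or> p \<noteq> 0")
  case True
  then show ?thesis using assms by (intro exI[of _ q] exI[of _ "- p"]) (auto simp: algebra_simps)
next
  case False
  note F = False
  show ?thesis
  proof (cases "s \<noteq> 0 \<or> r \<noteq> 0")
    case True
    then show ?thesis using assms F by (intro exI[of _ s] exI[of _ "- r"]) (auto simp: algebra_simps)
  next
    case False
    then show ?thesis using F by (intro exI[of _ 1] exI[of _ 0]) auto
  qed
qed

lemma indep:
  assumes L: "L > 0" and h: "\<forall>x\<in>{0..L}. a * EE mu x + c * w_fun mu x = 0"
  shows "a = 0 \<and> c = 0"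
proof -
  have a0: "a = 0" using h L by (metis EE_0 W_0 add.right_neutral atLeastAtMost_iff less_eq_real_def mult_1_right mult_zero_right order_refl)
  obtain x0 where x0: "x0 \<in> {0..L}" "w_fun mu x0 \<noteq> 0"
  proof (cases "mu = 0")
    case True
    then show ?thesis using that[of L] L by (simp add: w_fun_def)
  next
    case False
    define x0 where "x0 = min L (1 / cmod mu)"
    have x0p: "x0 > 0" using L False by (simp add: x0_def)
    have x0L: "x0 \<le> L" by (simp add: x0_def)
    have mx: "cmod mu * x0 \<le> 1" using False by (simp add: x0_def min_def field_simps)
    have "w_fun mu x0 \<noteq> 0"
    proof
      assume "w_fun mu x0 = 0"
      then have "exp (- mu * complex_of_real x0) = 1" using False by (simp add: w_fun_def)
      then obtain n :: int where re: "Re (- mu * complex_of_real x0) = 0"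
        and im: "Im (- mu * complex_of_real x0) = of_int (2 * n) * pi"
        unfolding exp_eq_1 by blast
      have "\<bar>Im (- mu * complex_of_real x0)\<bar> \<le> cmod (- mu * complex_of_real x0)" by (rule abs_Im_le_cmod)
      also have "\<dots> = cmod mu * x0" using x0p by (simp add: norm_mult)
      finally have "\<bar>of_int (2 * n) * pi\<bar> \<le> 1" using mx im by simp
      then have "n = 0"
      proof -
        assume a: "\<bar>of_int (2 * n) * pi\<bar> \<le> 1"
        show "n = 0"
        proof (rule ccontr)
          assume "n \<noteq> 0"
          then have "\<bar>real_of_int n\<bar> \<ge> 1" by linarith
          then have "\<bar>of_int (2 * n) * pi\<bar> \<ge> 2 * pi" by (simp add: abs_mult)
          with a pi_gt3 show False by linarith
        qed
      qed
      then have "- mu * complex_of_real x0 = 0" using re im by (simp add: complex_eq_iff)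
      then show False using False x0p by simp
    qed
    then show ?thesis using that[of x0] x0p x0L by simp
  qed
  have "a * EE mu x0 + c * w_fun mu x0 = 0" using h x0(1) by blast
  then have "c * w_fun mu x0 = 0" using a0 by simp
  then show ?thesis using x0 a0 by simp
qed

lemma expL:
  assumes L: "L > 0" and mu: "mu \<noteq> 0"
  shows "EE mu L = 1 \<longleftrightarrow> (\<exists>k::int. k \<noteq> 0 \<and> mu = 2 * \<i> * of_int k * of_real pi / of_real L)"
proof
  assume "EE mu L = 1"
  then obtain n :: int where re: "Re (- mu * complex_of_real L) = 0"
    and im: "Im (- mu * complex_of_real L) = of_int (2 * n) * pi"
    unfolding EE_def exp_eq_1 by blast
  have "mu = 2 * \<i> * of_int (- n) * of_real pi / of_real L"
    using re im L by (simp add: complex_eq_iff field_simps)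
  moreover have "- n \<noteq> 0" using mu calculation by auto
  ultimately show "\<exists>k::int. k \<noteq> 0 \<and> mu = 2 * \<i> * of_int k * of_real pi / of_real L" by blast
next
  assume "\<exists>k::int. k \<noteq> 0 \<and> mu = 2 * \<i> * of_int k * of_real pi / of_real L"
  then obtain k :: int where k: "mu = 2 * \<i> * of_int k * of_real pi / of_real L" by blast
  have "- mu * complex_of_real L = - (2 * \<i> * of_int k * of_real pi)" using k L by (simp add: field_simps)
  then have "exp (- mu * complex_of_real L) = 1"
    unfolding exp_eq_1 by (intro conjI exI[of _ "- k"]) simp_all
  then show "EE mu L = 1" by (simp add: EE_def)
qed

definition dt :: "real \<Rightarrow> (real \<Rightarrow> complex) \<Rightarrow> complex \<Rightarrow> complex" where
  "dt L g mu = (1 - EE mu L) * (gint L g (w_fun mu) - 1) - (- w_fun mu L) * gint L g (EE mu)"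

lemma gint_zero[simp]: "gint L g (\<lambda>_. 0) = 0" unfolding gint_def by simp

lemma dt_nz:
  assumes L: "L > 0" and g: "L2_on L g" and mu: "mu \<noteq> 0"
  shows "dt L g mu = (1 - EE mu L) * (gint L g (\<lambda>_. 1) - mu) / mu"
proof -
  have "gint L g (w_fun mu) = gint L g (\<lambda>x. (1 / mu) * 1 + (- 1 / mu) * EE mu x + 0)"
    by (rule gint_cong) (use mu in \<open>simp add: w_fun_def EE_def field_simps\<close>)
  also have "\<dots> = (1 / mu) * gint L g (\<lambda>_. 1) + (- 1 / mu) * gint L g (EE mu) + gint L g (\<lambda>_. 0)"
    by (rule gint_lin[OF g continuous_on_const EE_cont continuous_on_const])
  finally have gw: "gint L g (w_fun mu) = (gint L g (\<lambda>_. 1) - gint L g (EE mu)) / mu"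
    using mu by (simp add: diff_divide_distrib)
  have wL: "w_fun mu L = (1 - EE mu L) / mu" using mu by (simp add: w_fun_def EE_def)
  show ?thesis unfolding dt_def gw wL using mu by (simp add: field_simps)
qed

lemma dt_z:
  shows "dt L g 0 = of_real L * gint L g (\<lambda>_. 1)"
proof -
  have "EE 0 = (\<lambda>_. 1)" by (rule ext) (simp add: EE_def)
  then show ?thesis unfolding dt_def by (simp add: w_fun_def)
qed

lemma dt_iff:
  assumes L: "L > 0" and g: "L2_on L g"
  shows "dt L g mu = 0 \<longleftrightarrow> mu \<in> {2 * \<i> * of_int k * of_real pi / of_real L | k :: int. k \<noteq> 0} \<union> {gint L g (\<lambda>_. 1)}"
proof (cases "mu = 0")
  case True
  have "0 \<notin> {2 * \<i> * of_int k * of_real pi / of_real L | k :: int. k \<noteq> 0}" using L by auto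
  then show ?thesis using True L by (auto simp: dt_z)
next
  case False
  have "dt L g mu = 0 \<longleftrightarrow> EE mu L = 1 \<or> mu = gint L g (\<lambda>_. 1)"
    using False by (auto simp: dt_nz[OF L g False])
  also have "\<dots> \<longleftrightarrow> mu \<in> {2 * \<i> * of_int k * of_real pi / of_real L | k :: int. k \<noteq> 0} \<union> {gint L g (\<lambda>_. 1)}"
    using expL[OF L False] by blast
  finally show ?thesis .
qed

lemma cramer_bound:
  fixes p q r s a c F1 F2 :: complex
  assumes e1: "p * a + q * c = F1" and e2: "r * a + s * c = F2" and D: "p * s - q * r \<noteq> 0"
    and b1: "cmod F1 \<le> B" and b2: "cmod F2 \<le> B"
  shows "cmod a \<le> (cmod p + cmod q + cmod r + cmod s) * B / cmod (p * s - q * r)"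
    and "cmod c \<le> (cmod p + cmod q + cmod r + cmod s) * B / cmod (p * s - q * r)"
proof -
  have B0: "B \<ge> 0" using b1 norm_ge_zero order_trans by blast
  have Dp: "cmod (p * s - q * r) > 0" using D by simp
  have ea: "a * (p * s - q * r) = s * F1 - q * F2" using e1 e2 by (auto simp: algebra_simps)
  have ec: "c * (p * s - q * r) = p * F2 - r * F1" using e1 e2 by (auto simp: algebra_simps)
  have "cmod a * cmod (p * s - q * r) = cmod (s * F1 - q * F2)" using ea by (metis norm_mult)
  also have "\<dots> \<le> cmod s * cmod F1 + cmod q * cmod F2"
    by (metis norm_mult norm_triangle_ineq4)
  also have "\<dots> \<le> cmod s * B + cmod q * B" using b1 b2 by (intro add_mono mult_left_mono) auto
  also have "\<dots> \<le> (cmod p + cmod q + cmod r + cmod s) * B" using B0 by (simp add: algebra_simps)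
  finally show "cmod a \<le> (cmod p + cmod q + cmod r + cmod s) * B / cmod (p * s - q * r)"
    using Dp by (simp add: pos_le_divide_eq)
  have "cmod c * cmod (p * s - q * r) = cmod (p * F2 - r * F1)" using ec by (metis norm_mult)
  also have "\<dots> \<le> cmod p * cmod F2 + cmod r * cmod F1"
    by (metis norm_mult norm_triangle_ineq4)
  also have "\<dots> \<le> cmod p * B + cmod r * B" using b1 b2 by (intro add_mono mult_left_mono) auto
  also have "\<dots> \<le> (cmod p + cmod q + cmod r + cmod s) * B" using B0 by (simp add: algebra_simps)
  finally show "cmod c \<le> (cmod p + cmod q + cmod r + cmod s) * B / cmod (p * s - q * r)"
    using Dp by (simp add: pos_le_divide_eq)
qed

lemma f0L2: "L2_on L (\<lambda>_. 0 :: complex)" by (rule cont_L2) simp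

lemma FF0: "FF mu (\<lambda>_. 0) = (\<lambda>_. 0)" by (rule ext) simp

lemma notres:
  assumes L: "L > 0" and g: "L2_on L g" and d: "dt L g mu = 0"
  shows "\<not> in_resolvent L g mu"
proof
  assume inr: "in_resolvent L g mu"
  obtain a c where nz: "a \<noteq> 0 \<or> c \<noteq> 0" and e1: "(1 - EE mu L) * a + (- w_fun mu L) * c = 0"
    and e2: "gint L g (EE mu) * a + (gint L g (w_fun mu) - 1) * c = 0"
    using ker2x2[of "1 - EE mu L" "gint L g (w_fun mu) - 1" "- w_fun mu L" "gint L g (EE mu)"] d
    unfolding dt_def by blast
  define z where "z x = a * EE mu x + c * w_fun mu x + FF mu (\<lambda>_. 0) x" for x
  have zf: "\<forall>x\<in>{0..L}. z x = a * EE mu x + c * w_fun mu x + FF mu (\<lambda>_. 0) x"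
    by (simp add: z_def)
  have "shifted_eq L g mu z (\<lambda>_. 0)"
    by (rule char2[OF L g f0L2 _ _ zf]) (use e1 e2 in \<open>simp_all add: FF0\<close>)
  then have "\<forall>x\<in>{0..L}. z x = 0" using inr unfolding in_resolvent_def by blast
  then have "\<forall>x\<in>{0..L}. a * EE mu x + c * w_fun mu x = 0" by (simp add: z_def)
  from indep[OF L this] nz show False by blast
qed

lemma isres:
  assumes L: "L > 0" and g: "L2_on L g" and d: "dt L g mu \<noteq> 0"
  shows "in_resolvent L g mu"
proof -
  define p where "p = 1 - EE mu L"
  define q where "q = - w_fun mu L"
  define r where "r = gint L g (EE mu)"
  define s where "s = gint L g (w_fun mu) - 1"
  have D: "p * s - q * r \<noteq> 0" using d unfolding dt_def p_def q_def r_def s_def .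
  have surj: "\<exists>z. shifted_eq L g mu z f" if f: "L2_on L f" for f
  proof -
    define F1 where "F1 = FF mu f L"
    define F2 where "F2 = - gint L g (FF mu f)"
    define a where "a = (s * F1 - q * F2) / (p * s - q * r)"
    define c where "c = (p * F2 - r * F1) / (p * s - q * r)"
    have n1: "p * (s * F1 - q * F2) + q * (p * F2 - r * F1) = F1 * (p * s - q * r)" by (simp add: algebra_simps)
    have n2: "r * (s * F1 - q * F2) + s * (p * F2 - r * F1) = F2 * (p * s - q * r)" by (simp add: algebra_simps)
    have "p * a + q * c = (p * (s * F1 - q * F2) + q * (p * F2 - r * F1)) / (p * s - q * r)"
      unfolding a_def c_def by (simp add: add_divide_distrib)
    also have "\<dots> = F1" unfolding n1 using D by simp
    finally have e1: "p * a + q * c = F1" .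
    have "r * a + s * c = (r * (s * F1 - q * F2) + s * (p * F2 - r * F1)) / (p * s - q * r)"
      unfolding a_def c_def by (simp add: add_divide_distrib)
    also have "\<dots> = F2" unfolding n2 using D by simp
    finally have e2: "r * a + s * c = F2" .
    define z where "z x = a * EE mu x + c * w_fun mu x + FF mu f x" for x
    have "shifted_eq L g mu z f"
    proof (rule char2[OF L g f])
      show "(1 - EE mu L) * a - w_fun mu L * c = FF mu f L" using e1 unfolding p_def q_def F1_def by simp
      show "gint L g (EE mu) * a + (gint L g (w_fun mu) - 1) * c = - gint L g (FF mu f)"
        using e2 unfolding r_def s_def F2_def by simp
      show "\<forall>x\<in>{0..L}. z x = a * EE mu x + c * w_fun mu x + FF mu f x" by (simp add: z_def)
    qed
    then show ?thesis by blast
  qed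
  have inj: "\<forall>x\<in>{0..L}. z x = 0" if sh: "shifted_eq L g mu z (\<lambda>_. 0)" for z
  proof -
    obtain a c where e1: "(1 - EE mu L) * a - w_fun mu L * c = FF mu (\<lambda>_. 0) L"
      and e2: "gint L g (EE mu) * a + (gint L g (w_fun mu) - 1) * c = - gint L g (FF mu (\<lambda>_. 0))"
      and zf: "\<forall>x\<in>{0..L}. z x = a * EE mu x + c * w_fun mu x + FF mu (\<lambda>_. 0) x"
      using char1[OF L g f0L2 sh] by blast
    have e1': "p * a + q * c = 0" using e1 unfolding p_def q_def by simp
    have e2': "r * a + s * c = 0" using e2 unfolding r_def s_def FF0 by simp
    have "a * (p * s - q * r) = s * (p * a + q * c) - q * (r * a + s * c)" by (simp add: algebra_simps)
    then have a0: "a = 0" using e1' e2' D by simp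
    have "c * (p * s - q * r) = p * (r * a + s * c) - r * (p * a + q * c)" by (simp add: algebra_simps)
    then have c0: "c = 0" using e1' e2' D by simp
    show ?thesis using zf a0 c0 by simp
  qed
  obtain K where K0: "K \<ge> 0" and KB: "\<forall>f :: real \<Rightarrow> complex. f absolutely_integrable_on {0..L} \<longrightarrow>
     (\<forall>x\<in>{0..L}. cmod (FF mu f x) \<le> K * integral {0..L} (\<lambda>t. cmod (f t)))"
    using FF_bound[OF L, of mu] by blast
  obtain BE where BE: "BE > 0" "\<forall>x\<in>{0..L}. cmod (EE mu x) \<le> BE" using cont_bound[OF EE_cont] by blast
  obtain BW where BW: "BW > 0" "\<forall>x\<in>{0..L}. cmod (w_fun mu x) \<le> BW" using cont_bound[OF W_cont] by blast
  define Gm where "Gm = integral {0..L} (\<lambda>t. cmod (g t))"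
  have Gm0: "Gm \<ge> 0" unfolding Gm_def
    by (rule integral_nonneg) (use L2_absint[OF g] absolutely_integrable_on_def in auto)
  define T where "T = cmod p + cmod q + cmod r + cmod s"
  define K' where "K' = K * (1 + Gm)"
  define M where "M = T * K' / cmod (p * s - q * r)"
  define C1 where "C1 = M * BE + M * BW + K"
  have M0: "M \<ge> 0" unfolding M_def T_def K'_def using K0 Gm0 by simp
  have C10: "C1 \<ge> 0" unfolding C1_def using M0 BE BW K0 by simp
  have bound: "L2_norm_on L z \<le> (L * C1) * L2_norm_on L f" if f: "L2_on L f" and sh: "shifted_eq L g mu z f" for z f
  proof -
    have fa: "f absolutely_integrable_on {0..L}" by (rule L2_absint[OF f])
    define N where "N = integral {0..L} (\<lambda>t. cmod (f t))"
    have N0: "N \<ge> 0" unfolding N_def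
      by (rule integral_nonneg) (use fa absolutely_integrable_on_def in auto)
    obtain a c where e1: "(1 - EE mu L) * a - w_fun mu L * c = FF mu f L"
      and e2: "gint L g (EE mu) * a + (gint L g (w_fun mu) - 1) * c = - gint L g (FF mu f)"
      and zf: "\<forall>x\<in>{0..L}. z x = a * EE mu x + c * w_fun mu x + FF mu f x"
      using char1[OF L g f sh] by blast
    have FFb: "\<forall>x\<in>{0..L}. cmod (FF mu f x) \<le> K * N" using KB fa unfolding N_def by blast
    have KN0: "K * N \<ge> 0" using K0 N0 by simp
    have KK: "K * N \<le> K' * N" unfolding K'_def using K0 N0 Gm0 by (intro mult_right_mono) (auto simp: algebra_simps)
    have "cmod (FF mu f L) \<le> K * N" using FFb L by simp
    then have b1: "cmod (FF mu f L) \<le> K' * N" using KK by linarith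
    have "cmod (- gint L g (FF mu f)) \<le> (K * N) * Gm"
      unfolding Gm_def norm_minus_cancel by (rule gint_bound[OF g FF_cont[OF fa] FFb])
    also have "\<dots> \<le> K' * N" unfolding K'_def using K0 N0 Gm0 by (simp add: algebra_simps)
    finally have b2: "cmod (- gint L g (FF mu f)) \<le> K' * N" .
    have e1': "p * a + q * c = FF mu f L" using e1 unfolding p_def q_def by simp
    have e2': "r * a + s * c = - gint L g (FF mu f)" using e2 unfolding r_def s_def by simp
    have ab: "cmod a \<le> M * N" using cramer_bound(1)[OF e1' e2' D b1 b2] unfolding M_def T_def by simp
    have cb: "cmod c \<le> M * N" using cramer_bound(2)[OF e1' e2' D b1 b2] unfolding M_def T_def by simp
    have zb: "\<forall>x\<in>{0..L}. cmod (z x) \<le> C1 * N"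
    proof
      fix x assume x: "x \<in> {0..L}"
      have zx: "z x = a * EE mu x + c * w_fun mu x + FF mu f x" using zf x by blast
      have "cmod (z x) \<le> cmod (a * EE mu x + c * w_fun mu x) + cmod (FF mu f x)"
        unfolding zx by (rule norm_triangle_ineq)
      also have "\<dots> \<le> cmod (a * EE mu x) + cmod (c * w_fun mu x) + cmod (FF mu f x)"
        using norm_triangle_ineq[of "a * EE mu x" "c * w_fun mu x"] by linarith
      also have "\<dots> = cmod a * cmod (EE mu x) + cmod c * cmod (w_fun mu x) + cmod (FF mu f x)"
        by (simp add: norm_mult)
      also have "\<dots> \<le> (M * N) * BE + (M * N) * BW + K * N"
        using ab cb BE BW FFb x M0 N0 by (intro add_mono mult_mono) auto
      also have "\<dots> = C1 * N" unfolding C1_def by (simp add: algebra_simps)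
      finally show "cmod (z x) \<le> C1 * N" .
    qed
    have "L2_norm_on L z \<le> sqrt L * (C1 * N)"
      by (rule sup_L2) (use L C10 N0 zb in auto)
    also have "\<dots> \<le> sqrt L * (C1 * (sqrt L * L2_norm_on L f))"
      using CS[OF L f] C10 L unfolding N_def by (intro mult_left_mono) auto
    also have "\<dots> = (L * C1) * L2_norm_on L f" using L by (simp add: algebra_simps)
    finally show ?thesis .
  qed
  show ?thesis unfolding in_resolvent_def
    using surj inj bound by blast
qed

theorem proposition8:
  fixes L :: real and g :: "real \<Rightarrow> complex"
  assumes "L > 0" and "L2_on L g"
  shows "(\<forall>mu z. shifted_eq L g mu z (\<lambda>_. 0) \<longleftrightarrow>
            (\<exists>v :: complex^2. H_mat L g mu *v v = 0 \<and>
               (\<forall>x\<in>{0..L}. z x = v$1 * exp (- mu * complex_of_real x) + v$2 * w_fun mu x)))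
       \<and> spectrum_A L g =
           {2 * \<i> * of_int k * of_real pi / of_real L | k :: int. k \<noteq> 0}
           \<union> {gint L g (\<lambda>_. 1)}"
proof -
  note L = assms(1) and g = assms(2)
  have part1: "\<forall>mu z. shifted_eq L g mu z (\<lambda>_. 0) \<longleftrightarrow>
            (\<exists>v :: complex^2. H_mat L g mu *v v = 0 \<and>
               (\<forall>x\<in>{0..L}. z x = v$1 * exp (- mu * complex_of_real x) + v$2 * w_fun mu x))"
  proof (intro allI iffI)
    fix mu z assume sh: "shifted_eq L g mu z (\<lambda>_. 0)"
    obtain a c where e1: "(1 - EE mu L) * a - w_fun mu L * c = FF mu (\<lambda>_. 0) L"
      and e2: "gint L g (EE mu) * a + (gint L g (w_fun mu) - 1) * c = - gint L g (FF mu (\<lambda>_. 0))"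
      and zf: "\<forall>x\<in>{0..L}. z x = a * EE mu x + c * w_fun mu x + FF mu (\<lambda>_. 0) x"
      using char1[OF L g f0L2 sh] by blast
    have "H_mat L g mu *v (vector [a, c] :: complex^2) = 0"
      unfolding Hmat_mul using e1 e2 by (simp add: FF0)
    moreover have "\<forall>x\<in>{0..L}. z x = (vector [a, c] :: complex^2)$1 * exp (- mu * complex_of_real x) + (vector [a, c] :: complex^2)$2 * w_fun mu x"
      using zf by (simp add: EE_def)
    ultimately show "\<exists>v :: complex^2. H_mat L g mu *v v = 0 \<and>
               (\<forall>x\<in>{0..L}. z x = v$1 * exp (- mu * complex_of_real x) + v$2 * w_fun mu x)" by blast
  next
    fix mu z assume "\<exists>v :: complex^2. H_mat L g mu *v v = 0 \<and>
               (\<forall>x\<in>{0..L}. z x = v$1 * exp (- mu * complex_of_real x) + v$2 * w_fun mu x)"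
    then obtain v :: "complex^2" where hv: "H_mat L g mu *v v = 0"
      and zv: "\<forall>x\<in>{0..L}. z x = v$1 * exp (- mu * complex_of_real x) + v$2 * w_fun mu x" by blast
    have e: "(1 - EE mu L) * v$1 + (- w_fun mu L) * v$2 = 0" "gint L g (EE mu) * v$1 + (gint L g (w_fun mu) - 1) * v$2 = 0"
      using hv unfolding Hmat_mul by auto
    have zf: "\<forall>x\<in>{0..L}. z x = v$1 * EE mu x + v$2 * w_fun mu x + FF mu (\<lambda>_. 0) x"
      using zv by (simp add: EE_def)
    show "shifted_eq L g mu z (\<lambda>_. 0)"
      by (rule char2[OF L g f0L2 _ _ zf]) (use e in \<open>simp_all add: FF0\<close>)
  qed
  have res: "in_resolvent L g mu \<longleftrightarrow> dt L g mu \<noteq> 0" for mu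
    using notres[OF L g, of mu] isres[OF L g, of mu] by blast
  have "spectrum_A L g = {mu. dt L g mu = 0}"
    unfolding spectrum_A_def by (rule Collect_cong) (simp only: res not_not)
  also have "\<dots> = {2 * \<i> * of_int k * of_real pi / of_real L | k :: int. k \<noteq> 0} \<union> {gint L g (\<lambda>_. 1)}"
    by (rule set_eqI) (simp only: mem_Collect_eq dt_iff[OF L g])
  finally have sp: "spectrum_A L g = {2 * \<i> * of_int k * of_real pi / of_real L | k :: int. k \<noteq> 0} \<union> {gint L g (\<lambda>_. 1)}" .
  show ?thesis by (rule conjI[OF part1 sp])
qed

end
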